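(* Let $V$ be a finite set of variables and $\mathcal C=\{C_1,\dots,C_m\}$ a set of betweenness constraints over $V$. Let $\phi:V\to\{0,1,2,3\}$ be chosen uniformly at random and let $X=w(\mathcal C,\phi)$. Then $X$ can be expressed as a polynomial of degree $6$ in independent random variables, each uniformly distributed on $\{-1,1\}$.
   Context: A betweenness constraint is $(v_i,\{v_j,v_k\})$ with $v_i,v_j,v_k\in V$ distinct; a bijection $\alpha:V\to\{1,\dots,|V|\}$ satisfies it if $\alpha(v_j)<\alpha(v_i)<\alpha(v_k)$ or $\alpha(v_k)<\alpha(v_i)<\alpha(v_j)$. For $\phi:V\to\{0,1,2,3\}$ let $\ell_i(\phi)=|\phi^{-1}(i)|$. A random $\phi$-compatible bijection $\alpha$ is obtained by assigning, uniformly at random, the values $\sum_{i<j}\ell_i(\phi)+1,\dots,\sum_{i\le j}\ell_i(\phi)$ bijectively to the variables $v$ with $\phi(v)=j$, for each $j=0,1,2,3$. For a constraint $C_p$ let $\nu_p(\alpha)=1$ if $\alpha$ satisfies $C_p$ and $0$ otherwise; define $w(C_p,\phi)=\mathbb E[\nu_p(\alpha)]-1/3$, the expectation over a random $\phi$-compatible bijection $\alpha$ for fixed $\phi$, and $w(\mathcal C,\phi)=\sum_{p=1}^m w(C_p,\phi)$. *)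

theory Defs
  imports Complex_Main "HOL-Library.FuncSet"
begin

(* A betweenness constraint (vi, vj, vk) stands for (v_i, {v_j, v_k}). *)
type_synonym 'v constr = "'v \<times> 'v \<times> 'v"

definition ell :: "'v set \<Rightarrow> ('v \<Rightarrow> nat) \<Rightarrow> nat \<Rightarrow> nat" where
  "ell V phi i = card {v \<in> V. phi v = i}"

definition lo :: "'v set \<Rightarrow> ('v \<Rightarrow> nat) \<Rightarrow> nat \<Rightarrow> nat" where
  "lo V phi j = (\<Sum>i<j. ell V phi i)"

definition compat_bij :: "'v set \<Rightarrow> ('v \<Rightarrow> nat) \<Rightarrow> ('v \<Rightarrow> nat) set" where
  "compat_bij V phi = {alpha \<in> V \<rightarrow>\<^sub>E UNIV.
      bij_betw alpha V {1..card V} \<and>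
      (\<forall>v\<in>V. lo V phi (phi v) < alpha v \<and> alpha v \<le> lo V phi (phi v) + ell V phi (phi v))}"

definition satisfies :: "('v \<Rightarrow> nat) \<Rightarrow> 'v constr \<Rightarrow> bool" where
  "satisfies alpha C = (case C of (vi, vj, vk) \<Rightarrow>
      (alpha vj < alpha vi \<and> alpha vi < alpha vk) \<or> (alpha vk < alpha vi \<and> alpha vi < alpha vj))"

definition wC :: "'v set \<Rightarrow> ('v \<Rightarrow> nat) \<Rightarrow> 'v constr \<Rightarrow> real" where
  "wC V phi C = real (card {alpha \<in> compat_bij V phi. satisfies alpha C}) / real (card (compat_bij V phi)) - 1/3"

definition wCs :: "'v set \<Rightarrow> ('v \<Rightarrow> nat) \<Rightarrow> 'v constr list \<Rightarrow> real" where
  "wCs V phi Cs = (\<Sum>C\<leftarrow>Cs. wC V phi C)"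

end

theory Submission
  imports Defs
begin

lemma indic_prod:
  fixes x y :: "'a \<Rightarrow> real"
  assumes "finite T" "\<forall>i\<in>T. x i = 1 \<or> x i = -1" "y \<in> T \<rightarrow>\<^sub>E {-1,1}"
  shows "(\<Prod>i\<in>T. (1/2 + x i * y i / 2)) = (if y = restrict x T then 1 else 0)"
proof (cases "y = restrict x T")
  case True
  then have "\<forall>i\<in>T. 1/2 + x i * y i / 2 = 1" using assms(2) by auto
  then show ?thesis using True by simp
next
  case False
  then obtain i where i: "i \<in> T" "y i \<noteq> x i"
    using assms(3) by (auto simp: fun_eq_iff PiE_def extensional_def restrict_def split: if_splits)
  moreover have "x i = 1 \<or> x i = -1" "y i = 1 \<or> y i = -1" using assms(2,3) i by (auto simp: PiE_def Pi_def)
  ultimately have "1/2 + x i * y i / 2 = 0" by auto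
  then show ?thesis using False i assms(1) by (auto intro: prod_zero)
qed

lemma rep:
  fixes T :: "'a set" and f :: "('a \<Rightarrow> real) \<Rightarrow> real"
  assumes fin: "finite T" and dep: "\<forall>x y. (\<forall>i\<in>T. x i = y i) \<longrightarrow> f x = f y"
  shows "\<exists>c. \<forall>x. (\<forall>i\<in>T. x i = 1 \<or> x i = -1) \<longrightarrow> f x = (\<Sum>S\<in>Pow T. c S * (\<Prod>i\<in>S. x i))"
proof -
  define Y where "Y = T \<rightarrow>\<^sub>E {-1,1::real}"
  have finY: "finite Y" unfolding Y_def using fin by (simp add: finite_PiE)
  define c where "c S = (\<Sum>y\<in>Y. f y * (\<Prod>i\<in>S. y i / 2) * (\<Prod>i\<in>T-S. 1/2))" for S
  show ?thesis
  proof (intro exI allI impI)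
    fix x :: "'a \<Rightarrow> real"
    assume x: "\<forall>i\<in>T. x i = 1 \<or> x i = -1"
    have rx: "restrict x T \<in> Y" unfolding Y_def using x by auto
    have "f x = f (restrict x T)" using dep by auto
    also have "\<dots> = (\<Sum>y\<in>Y. f y * (if y = restrict x T then 1 else 0))"
      using finY rx by (simp add: sum.delta' if_distrib cong: if_cong)
    also have "\<dots> = (\<Sum>y\<in>Y. f y * (\<Prod>i\<in>T. (x i * y i / 2 + 1/2)))"
      using indic_prod[OF fin x] by (auto simp: Y_def add.commute intro!: sum.cong)
    also have "\<dots> = (\<Sum>y\<in>Y. f y * (\<Sum>S\<in>Pow T. (\<Prod>i\<in>S. x i * y i / 2) * (\<Prod>i\<in>T-S. 1/2)))"
      by (subst prod_add[OF fin]) simp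
    also have "\<dots> = (\<Sum>y\<in>Y. \<Sum>S\<in>Pow T. (\<Prod>i\<in>S. x i) * (f y * (\<Prod>i\<in>S. y i / 2) * (\<Prod>i\<in>T-S. 1/2)))"
    proof -
      have "\<And>S. (\<Prod>i\<in>S. x i * y i / 2) = (\<Prod>i\<in>S. x i) * (\<Prod>i\<in>S. y i / 2)" for y
        by (simp add: prod.distrib[symmetric])
      then show ?thesis by (simp add: sum_distrib_left mult_ac)
    qed
    also have "\<dots> = (\<Sum>S\<in>Pow T. \<Sum>y\<in>Y. (\<Prod>i\<in>S. x i) * (f y * (\<Prod>i\<in>S. y i / 2) * (\<Prod>i\<in>T-S. 1/2)))"
      by (rule sum.swap)
    also have "\<dots> = (\<Sum>S\<in>Pow T. c S * (\<Prod>i\<in>S. x i))"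
      by (simp add: c_def sum_distrib_left mult_ac)
    finally show "f x = (\<Sum>S\<in>Pow T. c S * (\<Prod>i\<in>S. x i))" .
  qed
qed


lemma lo_Suc: "lo V phi (Suc j) = lo V phi j + ell V phi j"
  by (simp add: lo_def)

lemma lo_mono: "j \<le> k \<Longrightarrow> lo V phi j \<le> lo V phi k"
  unfolding lo_def by (rule sum_mono2) auto

lemma interval_order:
  assumes "j < k" "p \<le> lo V phi j + ell V phi j" "lo V phi k < q" shows "p < q"
proof -
  have "lo V phi (Suc j) \<le> lo V phi k" using assms(1) by (intro lo_mono) simp
  then show ?thesis using assms(2,3) lo_Suc[of V phi j] by linarith
qed

lemma block_order:
  assumes "alpha \<in> compat_bij V phi" "u \<in> V" "w \<in> V" "phi u < phi w"
  shows "alpha u < alpha w"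
proof -
  have "alpha u \<le> lo V phi (phi u) + ell V phi (phi u)" "lo V phi (phi w) < alpha w"
    using assms(1-3) unfolding compat_bij_def by auto
  then show ?thesis by (rule interval_order[OF assms(4)])
qed

definition tau :: "'v \<Rightarrow> 'v \<Rightarrow> 'v \<Rightarrow> 'v" where
  "tau u w v = (if v = u then w else if v = w then u else v)"

definition sw :: "'v \<Rightarrow> 'v \<Rightarrow> ('v \<Rightarrow> nat) \<Rightarrow> ('v \<Rightarrow> nat)" where
  "sw u w alpha = alpha \<circ> tau u w"

lemma bij_tau: "u \<in> V \<Longrightarrow> w \<in> V \<Longrightarrow> bij_betw (tau u w) V V"
  by (rule bij_betw_byWitness[where f'="tau u w"]) (auto simp: tau_def)

lemma sw_sw: "sw u w (sw u w a) = a"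
  by (auto simp: sw_def tau_def fun_eq_iff)

lemma sw_in:
  assumes "alpha \<in> compat_bij V phi" "u \<in> V" "w \<in> V" "phi u = phi w"
  shows "sw u w alpha \<in> compat_bij V phi"
proof -
  have b: "bij_betw alpha V {1..card V}" and ae: "alpha \<in> V \<rightarrow>\<^sub>E UNIV"
    and blk: "\<forall>v\<in>V. lo V phi (phi v) < alpha v \<and> alpha v \<le> lo V phi (phi v) + ell V phi (phi v)"
    using assms(1) unfolding compat_bij_def by blast+
  have "bij_betw (alpha \<circ> tau u w) V {1..card V}"
    by (rule bij_betw_trans[OF bij_tau[OF assms(2,3)] b])
  moreover have "alpha \<circ> tau u w \<in> V \<rightarrow>\<^sub>E UNIV"
  proof -
    have "(alpha \<circ> tau u w) v = undefined" if "v \<notin> V" for v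
    proof -
      have "tau u w v = v" using that assms(2,3) unfolding tau_def by auto
      then show ?thesis using PiE_arb[OF ae that] by simp
    qed
    then show ?thesis by (simp add: PiE_iff extensional_def)
  qed
  moreover have "\<forall>v\<in>V. lo V phi (phi v) < (alpha \<circ> tau u w) v \<and>
      (alpha \<circ> tau u w) v \<le> lo V phi (phi v) + ell V phi (phi v)"
  proof
    fix v assume v: "v \<in> V"
    have t: "tau u w v \<in> V" "phi (tau u w v) = phi v" using v assms(2-4) unfolding tau_def by auto
    from blk t(1) have "lo V phi (phi (tau u w v)) < alpha (tau u w v) \<and>
       alpha (tau u w v) \<le> lo V phi (phi (tau u w v)) + ell V phi (phi (tau u w v))" by blast
    then show "lo V phi (phi v) < (alpha \<circ> tau u w) v \<and>
      (alpha \<circ> tau u w) v \<le> lo V phi (phi v) + ell V phi (phi v)"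
      unfolding t(2) by simp
  qed
  ultimately show ?thesis unfolding compat_bij_def sw_def by blast
qed

lemma card_inv:
  assumes "\<forall>a\<in>B. s a \<in> B" "\<forall>a\<in>B. s (s a) = a"
  shows "card {a\<in>B. P (s a)} = card {a\<in>B. P a}"
proof -
  have "bij_betw s {a\<in>B. P (s a)} {a\<in>B. P a}"
    by (rule bij_betw_byWitness[where f'=s]) (use assms in auto)
  then show ?thesis by (rule bij_betw_same_card)
qed

lemma card_split: "finite B \<Longrightarrow> card B = card {a\<in>B. P a} + card {a\<in>B. \<not> P a}"
proof -
  assume "finite B"
  have "B = {a\<in>B. P a} \<union> {a\<in>B. \<not> P a}" by auto
  then have "card B = card ({a\<in>B. P a} \<union> {a\<in>B. \<not> P a})" by simp
  also have "\<dots> = card {a\<in>B. P a} + card {a\<in>B. \<not> P a}"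
    using \<open>finite B\<close> by (intro card_Un_disjoint) auto
  finally show ?thesis .
qed

lemma compat_finite:
  assumes "finite V" shows "finite (compat_bij V phi)"
proof -
  have "compat_bij V phi \<subseteq> V \<rightarrow>\<^sub>E {1..card V}"
    unfolding compat_bij_def by (auto simp: PiE_def Pi_def dest: bij_betw_apply)
  moreover have "finite (V \<rightarrow>\<^sub>E {1..card V})" using assms by (simp add: finite_PiE)
  ultimately show ?thesis by (rule finite_subset)
qed

lemma compat_nonempty:
  assumes fin: "finite V" and phi: "phi \<in> V \<rightarrow>\<^sub>E {0..3}"
  shows "compat_bij V phi \<noteq> {}"
proof -
  define Vj where "Vj j = {v\<in>V. phi v = j}" for j
  have "\<forall>j. \<exists>h. bij_betw h (Vj j) {lo V phi j + 1..lo V phi j + ell V phi j}"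
  proof
    fix j
    show "\<exists>h. bij_betw h (Vj j) {lo V phi j + 1..lo V phi j + ell V phi j}"
      by (rule finite_same_card_bij) (use fin in \<open>auto simp: Vj_def ell_def\<close>)
  qed
  then obtain h where h: "\<And>j. bij_betw (h j) (Vj j) {lo V phi j + 1..lo V phi j + ell V phi j}"
    by metis
  define alpha where "alpha = restrict (\<lambda>v. h (phi v) v) V"
  have hv: "alpha v \<in> {lo V phi (phi v) + 1..lo V phi (phi v) + ell V phi (phi v)}" if "v \<in> V" for v
    using bij_betw_apply[OF h[of "phi v"]] that by (auto simp: alpha_def Vj_def)
  have inj: "inj_on alpha V"
  proof (rule inj_onI)
    fix u w assume u: "u \<in> V" and w: "w \<in> V" and eq: "alpha u = alpha w"
    consider "phi u = phi w" | "phi u < phi w" | "phi w < phi u" by linarith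
    then show "u = w"
    proof cases
      case 1
      have "inj_on (h (phi u)) (Vj (phi u))" using h bij_betw_imp_inj_on by blast
      moreover have "u \<in> Vj (phi u)" "w \<in> Vj (phi u)" using u w 1 by (auto simp: Vj_def)
      moreover have "h (phi u) u = h (phi u) w" using eq u w 1 by (simp add: alpha_def)
      ultimately show ?thesis by (meson inj_onD)
    next
      case 2
      have "alpha u \<le> lo V phi (phi u) + ell V phi (phi u)" "lo V phi (phi w) < alpha w"
        using hv[OF u] hv[OF w] by auto
      then have "alpha u < alpha w" by (rule interval_order[OF 2])
      then show ?thesis using eq by simp
    next
      case 3
      have "alpha w \<le> lo V phi (phi w) + ell V phi (phi w)" "lo V phi (phi u) < alpha u"
        using hv[OF u] hv[OF w] by auto
      then have "alpha w < alpha u" by (rule interval_order[OF 3])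
      then show ?thesis using eq by simp
    qed
  qed
  have V_un: "V = (\<Union>j\<in>{..<4}. Vj j)" using phi by (auto simp: Vj_def PiE_def Pi_def)
  have "card V = (\<Sum>j<4. card (Vj j))"
    by (subst V_un, rule card_UN_disjoint) (use fin in \<open>auto simp: Vj_def\<close>)
  then have cV: "card V = lo V phi 4" by (simp add: lo_def ell_def Vj_def)
  have sub: "alpha ` V \<subseteq> {1..card V}"
  proof
    fix a assume "a \<in> alpha ` V"
    then obtain v where v: "v \<in> V" "a = alpha v" by auto
    have p: "phi v < 4" using phi v by (auto simp: PiE_def Pi_def)
    have "lo V phi (Suc (phi v)) \<le> lo V phi 4" using p by (intro lo_mono) simp
    then show "a \<in> {1..card V}" using hv[OF v(1)] v cV lo_Suc[of V phi "phi v"] by auto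
  qed
  have "card (alpha ` V) = card {1..card V}" using card_image[OF inj] by simp
  then have "alpha ` V = {1..card V}" using sub by (intro card_subset_eq) auto
  then have "bij_betw alpha V {1..card V}" using inj by (simp add: bij_betw_def)
  moreover have "alpha \<in> V \<rightarrow>\<^sub>E UNIV" by (simp add: alpha_def)
  moreover have "\<forall>v\<in>V. lo V phi (phi v) < alpha v \<and> alpha v \<le> lo V phi (phi v) + ell V phi (phi v)"
  proof
    fix v assume "v \<in> V"
    from hv[OF this] show "lo V phi (phi v) < alpha v \<and> alpha v \<le> lo V phi (phi v) + ell V phi (phi v)"
      by simp
  qed
  ultimately have "alpha \<in> compat_bij V phi" unfolding compat_bij_def by blast
  then show ?thesis by auto
qed


definition gw :: "nat \<Rightarrow> nat \<Rightarrow> nat \<Rightarrow> real" where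
  "gw a b c = (if a = b \<and> b = c then 1/3 else if a = b \<or> a = c then 1/2 else if b = c then 0
     else if (b < a \<and> a < c) \<or> (c < a \<and> a < b) then 1 else 0) - 1/3"

lemma wC_local:
  assumes fin: "finite V" and phi: "phi \<in> V \<rightarrow>\<^sub>E {0..3}"
    and xyz: "x \<in> V" "y \<in> V" "z \<in> V" "distinct [x, y, z]"
  shows "wC V phi (x, y, z) = gw (phi x) (phi y) (phi z)"
proof -
  define B where "B = compat_bij V phi"
  have finB: "finite B" unfolding B_def using fin by (rule compat_finite)
  have Npos: "card B > 0" unfolding B_def using finB compat_nonempty[OF fin phi]
    by (simp add: B_def card_gt_0_iff)
  have dist: "a x \<noteq> a y \<and> a x \<noteq> a z \<and> a y \<noteq> a z" if "a \<in> B" for a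
  proof -
    have "inj_on a V" using that by (auto simp: B_def compat_bij_def bij_betw_def)
    then show ?thesis using xyz by (metis distinct_length_2_or_more distinct_singleton inj_on_eq_iff)
  qed
  define K where "K = card {a\<in>B. satisfies a (x, y, z)}"
  have swB: "\<forall>a\<in>B. sw u w a \<in> B" "\<forall>a\<in>B. sw u w (sw u w a) = a"
    if "u \<in> V" "w \<in> V" "phi u = phi w" for u w
    using sw_in[of _ V phi u w] that sw_sw by (auto simp: B_def)
  have ord: "a u < a w" if "a \<in> B" "u \<in> V" "w \<in> V" "phi u < phi w" for a u w
    using block_order[of a V phi u w] that by (simp add: B_def)
  have xy: "x \<noteq> y" "x \<noteq> z" "y \<noteq> z" using xyz(4) by auto
  have key: "real K = (gw (phi x) (phi y) (phi z) + 1/3) * real (card B)"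
  proof -
    consider (all) "phi x = phi y" "phi y = phi z"
      | (ab) "phi x = phi y" "phi y \<noteq> phi z"
      | (ac) "phi x = phi z" "phi y \<noteq> phi z"
      | (bc) "phi x \<noteq> phi y" "phi y = phi z"
      | (dd) "phi x \<noteq> phi y" "phi x \<noteq> phi z" "phi y \<noteq> phi z"
      by blast
    then show ?thesis
    proof cases
      case all
      define S2 where "S2 = {a\<in>B. satisfies a (y, x, z)}"
      define S3 where "S3 = {a\<in>B. satisfies a (z, y, x)}"
      define S1 where "S1 = {a\<in>B. satisfies a (x, y, z)}"
      have "card {a\<in>B. satisfies (sw x y a) (x, y, z)} = K"
        unfolding K_def by (rule card_inv) (use swB[of x y] xyz all in auto)
      moreover have "{a\<in>B. satisfies (sw x y a) (x, y, z)} = S2"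
        unfolding S2_def using xy by (auto simp: sw_def tau_def satisfies_def)
      ultimately have c2: "card S2 = K" by simp
      have "card {a\<in>B. satisfies (sw x z a) (x, y, z)} = K"
        unfolding K_def by (rule card_inv) (use swB[of x z] xyz all in auto)
      moreover have "{a\<in>B. satisfies (sw x z a) (x, y, z)} = S3"
        unfolding S3_def using xy by (auto simp: sw_def tau_def satisfies_def)
      ultimately have c3: "card S3 = K" by simp
      have Bu: "B = S1 \<union> S2 \<union> S3"
      proof (rule set_eqI)
        fix a show "a \<in> B \<longleftrightarrow> a \<in> S1 \<union> S2 \<union> S3"
        proof (cases "a \<in> B")
          case True
          then show ?thesis using dist[OF True] unfolding S1_def S2_def S3_def satisfies_def
            by auto
        qed (auto simp: S1_def S2_def S3_def)
      qed
      have "card B = card (S1 \<union> S2) + card S3"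
        unfolding Bu using finB dist
        by (intro card_Un_disjoint) (auto simp: S1_def S2_def S3_def satisfies_def)
      also have "card (S1 \<union> S2) = card S1 + card S2"
        using finB dist
        by (intro card_Un_disjoint) (auto simp: S1_def S2_def S3_def satisfies_def)
      finally have "card B = 3 * K" using c2 c3 by (simp add: S1_def K_def)
      then show ?thesis using all by (simp add: gw_def)
    next
      case ab
      have "card {a\<in>B. \<not> satisfies a (x, y, z)} = card {a\<in>B. satisfies (sw x y a) (x, y, z)}"
      proof (rule arg_cong[where f=card], rule Collect_cong)
        fix a show "(a \<in> B \<and> \<not> satisfies a (x, y, z)) = (a \<in> B \<and> satisfies (sw x y a) (x, y, z))"
        proof (cases "a \<in> B")
          case True
          note d = dist[OF True]
          show ?thesis
          proof (cases "phi x < phi z")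
            case True
            then have "a x < a z" "a y < a z" using ord[OF \<open>a \<in> B\<close>] xyz ab by auto
            then show ?thesis using d xy \<open>a \<in> B\<close> by (auto simp: sw_def tau_def satisfies_def)
          next
            case False
            then have "phi z < phi x" using ab by auto
            then have "a z < a x" "a z < a y" using ord[OF \<open>a \<in> B\<close>] xyz ab by auto
            then show ?thesis using d xy \<open>a \<in> B\<close> by (auto simp: sw_def tau_def satisfies_def)
          qed
        qed simp
      qed
      also have "\<dots> = K" unfolding K_def by (rule card_inv) (use swB[of x y] xyz ab in auto)
      finally have "card B = 2 * K" using card_split[OF finB, of "\<lambda>a. satisfies a (x, y, z)"]
        by (simp add: K_def)
      then show ?thesis using ab by (simp add: gw_def)
    next
      case ac
      have "card {a\<in>B. \<not> satisfies a (x, y, z)} = card {a\<in>B. satisfies (sw x z a) (x, y, z)}"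
      proof (rule arg_cong[where f=card], rule Collect_cong)
        fix a show "(a \<in> B \<and> \<not> satisfies a (x, y, z)) = (a \<in> B \<and> satisfies (sw x z a) (x, y, z))"
        proof (cases "a \<in> B")
          case True
          note d = dist[OF True]
          show ?thesis
          proof (cases "phi x < phi y")
            case True
            then have "a x < a y" "a z < a y" using ord[OF \<open>a \<in> B\<close>] xyz ac by auto
            then show ?thesis using d xy \<open>a \<in> B\<close> by (auto simp: sw_def tau_def satisfies_def)
          next
            case False
            then have "phi y < phi x" using ac by auto
            then have "a y < a x" "a y < a z" using ord[OF \<open>a \<in> B\<close>] xyz ac by auto
            then show ?thesis using d xy \<open>a \<in> B\<close> by (auto simp: sw_def tau_def satisfies_def)
          qed
        qed simp
      qed
      also have "\<dots> = K" unfolding K_def by (rule card_inv) (use swB[of x z] xyz ac in auto)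
      finally have "card B = 2 * K" using card_split[OF finB, of "\<lambda>a. satisfies a (x, y, z)"]
        by (simp add: K_def)
      then show ?thesis using ac by (simp add: gw_def)
    next
      case bc
      have e: "{a\<in>B. satisfies a (x, y, z)} = {}"
      proof -
        have "\<not> satisfies a (x, y, z)" if a: "a \<in> B" for a
        proof (cases "phi x < phi y")
          case True
          then have "a x < a y" "a x < a z" using ord[OF a] xyz bc by auto
          then show ?thesis by (auto simp: satisfies_def)
        next
          case False
          then have "phi y < phi x" using bc by auto
          then have "a y < a x" "a z < a x" using ord[OF a] xyz bc by auto
          then show ?thesis by (auto simp: satisfies_def)
        qed
        then show ?thesis by auto
      qed
      have "K = 0" by (simp only: K_def e card.empty)
      moreover have "gw (phi x) (phi y) (phi z) = -1/3" using bc unfolding gw_def by auto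
      ultimately show ?thesis by simp
    next
      case dd
      have "satisfies a (x, y, z) = ((phi y < phi x \<and> phi x < phi z) \<or> (phi z < phi x \<and> phi x < phi y))"
        if a: "a \<in> B" for a
      proof -
        have o: "phi u < phi w \<Longrightarrow> a u < a w" if "u \<in> {x,y,z}" "w \<in> {x,y,z}" for u w
          using ord[OF a, of u w] that xyz by auto
        have "phi x < phi y \<or> phi y < phi x" "phi x < phi z \<or> phi z < phi x" "phi y < phi z \<or> phi z < phi y"
          using dd by auto
        then show ?thesis unfolding satisfies_def using o[of x y] o[of y x] o[of x z] o[of z x] o[of y z] o[of z y]
          by auto
      qed
      note sat = this
      show ?thesis
      proof (cases "(phi y < phi x \<and> phi x < phi z) \<or> (phi z < phi x \<and> phi x < phi y)")
        case True
        then have e: "{a\<in>B. satisfies a (x, y, z)} = B" using sat by auto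
        have "K = card B" by (simp only: K_def e)
        moreover have "gw (phi x) (phi y) (phi z) = 2/3" using dd True unfolding gw_def by auto
        ultimately show ?thesis by simp
      next
        case False
        then have e: "{a\<in>B. satisfies a (x, y, z)} = {}" using sat by auto
        have "K = 0" by (simp only: K_def e card.empty)
        moreover have "gw (phi x) (phi y) (phi z) = -1/3" using dd False unfolding gw_def by auto
        ultimately show ?thesis by simp
      qed
    qed
  qed
  have "real K / real (card B) = gw (phi x) (phi y) (phi z) + 1/3"
    using key Npos by (simp add: divide_simps)
  then show ?thesis unfolding wC_def K_def B_def by simp
qed


definition bitv :: "nat \<Rightarrow> bool \<Rightarrow> real" where
  "bitv n b = (if (if b then 2 \<le> n else odd n) then 1 else -1)"

definition encV :: "'v set \<Rightarrow> ('v \<Rightarrow> nat) \<Rightarrow> ('v \<times> bool \<Rightarrow> real)" where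
  "encV V phi = restrict (\<lambda>(v, b). bitv (phi v) b) (V \<times> UNIV)"

definition dec :: "('v \<times> bool \<Rightarrow> real) \<Rightarrow> 'v \<Rightarrow> nat" where
  "dec e v = (if e (v, True) = 1 then 2 else 0) + (if e (v, False) = 1 then 1 else 0)"

lemma dec_enc:
  assumes "phi v \<in> {0..3}" "v \<in> V" shows "dec (encV V phi) v = phi v"
proof -
  have "phi v = 0 \<or> phi v = 1 \<or> phi v = 2 \<or> phi v = 3" using assms(1) by auto
  then show ?thesis using assms(2) by (auto simp: dec_def encV_def bitv_def)
qed

lemma enc_pm: "phi \<in> V \<rightarrow>\<^sub>E {0..3} \<Longrightarrow> i \<in> V \<times> UNIV \<Longrightarrow> encV V phi i = 1 \<or> encV V phi i = -1"
  by (cases i) (auto simp: encV_def bitv_def)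

lemma bitv_dec:
  assumes "e (v, True) \<in> {-1, 1}" "e (v, False) \<in> {-1, 1}"
  shows "bitv (dec e v) b = e (v, b)"
proof -
  have "e (v, True) = 1 \<or> e (v, True) = -1" "e (v, False) = 1 \<or> e (v, False) = -1" using assms by auto
  then show ?thesis by (cases b) (auto simp: dec_def bitv_def)
qed

lemma enc_bij:
  "bij_betw (encV V) (V \<rightarrow>\<^sub>E {0..3}) ((V \<times> (UNIV :: bool set)) \<rightarrow>\<^sub>E {-1, 1})"
proof -
  have inj: "inj_on (encV V) (V \<rightarrow>\<^sub>E {0..3})"
  proof (rule inj_onI)
    fix phi psi assume phi: "phi \<in> V \<rightarrow>\<^sub>E {0..3}" and psi: "psi \<in> V \<rightarrow>\<^sub>E {0..3}"
      and eq: "encV V phi = encV V psi"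
    show "phi = psi"
    proof (rule ext)
      fix v show "phi v = psi v"
      proof (cases "v \<in> V")
        case True
        have p1: "phi v \<in> {0..3}" using phi True by (rule PiE_mem)
        have p2: "psi v \<in> {0..3}" using psi True by (rule PiE_mem)
        have d1: "dec (encV V phi) v = phi v" using dec_enc[of phi v V] p1 True by simp
        have d2: "dec (encV V psi) v = psi v" using dec_enc[of psi v V] p2 True by simp
        show ?thesis using d1 d2 eq by metis
      next
        case False
        show ?thesis using PiE_arb[OF phi False] PiE_arb[OF psi False] by simp
      qed
    qed
  qed
  have sub: "encV V ` (V \<rightarrow>\<^sub>E {0..3}) \<subseteq> (V \<times> UNIV) \<rightarrow>\<^sub>E {-1, 1}"
  proof
    fix e assume "e \<in> encV V ` (V \<rightarrow>\<^sub>E {0..3})"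
    then obtain phi where phi: "phi \<in> V \<rightarrow>\<^sub>E {0..3}" "e = encV V phi" by auto
    have "\<forall>i\<in>V \<times> UNIV. encV V phi i \<in> {-1, 1}" using enc_pm[OF phi(1)] by blast
    moreover have "encV V phi \<in> extensional (V \<times> UNIV)" by (simp add: encV_def)
    ultimately show "e \<in> (V \<times> UNIV) \<rightarrow>\<^sub>E {-1, 1}" using phi(2) by (simp add: PiE_iff)
  qed
  have sup: "(V \<times> UNIV) \<rightarrow>\<^sub>E {-1, 1} \<subseteq> encV V ` (V \<rightarrow>\<^sub>E {0..3})"
  proof
    fix e :: "'a \<times> bool \<Rightarrow> real" assume e: "e \<in> (V \<times> UNIV) \<rightarrow>\<^sub>E {-1, 1}"
    define phi where "phi = restrict (dec e) V"
    have "dec e v \<le> 3" for v by (simp add: dec_def)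
    then have phiA: "phi \<in> V \<rightarrow>\<^sub>E {0..3}" by (simp add: phi_def PiE_iff)
    have "encV V phi = e"
    proof (rule ext)
      fix i :: "'a \<times> bool"
      obtain v b where i: "i = (v, b)" by (cases i)
      show "encV V phi i = e i"
      proof (cases "v \<in> V")
        case True
        have "e (v, True) \<in> {-1, 1}" "e (v, False) \<in> {-1, 1}"
          using e True by (auto intro: PiE_mem)
        then have "bitv (dec e v) b = e (v, b)" by (rule bitv_dec)
        moreover have "encV V phi i = bitv (dec e v) b" using True i by (simp add: encV_def phi_def)
        ultimately show ?thesis using i by simp
      next
        case False
        then have ni: "i \<notin> V \<times> UNIV" using i by simp
        show ?thesis using PiE_arb[OF e ni] ni by (simp add: encV_def)
      qed
    qed
    then show "e \<in> encV V ` (V \<rightarrow>\<^sub>E {0..3})" using phiA by blast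
  qed
  show ?thesis unfolding bij_betw_def using inj sub sup by blast
qed

lemma single:
  assumes fin: "finite V" and xyz: "x \<in> V" "y \<in> V" "z \<in> V" "distinct [x, y, z]"
  shows "\<exists>c. \<forall>phi \<in> V \<rightarrow>\<^sub>E {0..3}. wC V phi (x, y, z) =
     (\<Sum>S \<in> {S. S \<subseteq> V \<times> (UNIV::bool set) \<and> card S \<le> 6}. c S * (\<Prod>i\<in>S. encV V phi i))"
proof -
  define T where "T = {x, y, z} \<times> (UNIV :: bool set)"
  have finT: "finite T" by (simp add: T_def)
  define f where "f e = gw (dec e x) (dec e y) (dec e z)" for e :: "'a \<times> bool \<Rightarrow> real"
  have dep: "\<forall>e e'. (\<forall>i\<in>T. e i = e' i) \<longrightarrow> f e = f e'"
    by (auto simp: f_def dec_def T_def)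
  obtain c0 where c0: "\<And>e. (\<forall>i\<in>T. e i = 1 \<or> e i = -1) \<Longrightarrow> f e = (\<Sum>S\<in>Pow T. c0 S * (\<Prod>i\<in>S. e i))"
    using rep[OF finT dep] by blast
  define F where "F = {S. S \<subseteq> V \<times> (UNIV::bool set) \<and> card S \<le> 6}"
  have finF: "finite F"
  proof (rule finite_subset)
    show "F \<subseteq> Pow (V \<times> UNIV)" by (auto simp: F_def)
    show "finite (Pow (V \<times> (UNIV :: bool set)))" using fin by simp
  qed
  have cT: "card T \<le> 6"
  proof -
    have "card {x, y, z} \<le> 3" using distinct_card[OF xyz(4)] by simp
    then show ?thesis by (simp add: T_def card_cartesian_product)
  qed
  have PowF: "F \<inter> Pow T = Pow T"
  proof -
    have "Pow T \<subseteq> F"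
    proof
      fix S assume "S \<in> Pow T"
      then have "S \<subseteq> T" by simp
      moreover have "card S \<le> card T" using \<open>S \<subseteq> T\<close> finT by (rule card_mono[rotated])
      ultimately show "S \<in> F" using cT xyz by (auto simp: F_def T_def)
    qed
    then show ?thesis by blast
  qed
  show ?thesis
  proof (intro exI ballI)
    fix phi :: "_ \<Rightarrow> nat" assume phi: "phi \<in> V \<rightarrow>\<^sub>E {0..3}"
    have pv: "phi v \<in> {0..3}" if "v \<in> V" for v using phi that by (auto simp: PiE_def Pi_def)
    have "wC V phi (x, y, z) = gw (phi x) (phi y) (phi z)"
      by (rule wC_local[OF fin phi xyz])
    also have "\<dots> = f (encV V phi)"
      using dec_enc[of phi x V] dec_enc[of phi y V] dec_enc[of phi z V] pv xyz
      by (simp add: f_def)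
    also have "\<dots> = (\<Sum>S\<in>Pow T. c0 S * (\<Prod>i\<in>S. encV V phi i))"
    proof (rule c0, rule ballI)
      fix i assume "i \<in> T"
      then have "i \<in> V \<times> UNIV" using xyz by (auto simp: T_def)
      then show "encV V phi i = 1 \<or> encV V phi i = -1" by (rule enc_pm[OF phi])
    qed
    also have "\<dots> = (\<Sum>S\<in>F \<inter> Pow T. c0 S * (\<Prod>i\<in>S. encV V phi i))" by (simp only: PowF)
    also have "\<dots> = (\<Sum>S\<in>F. (if S \<in> Pow T then c0 S else 0) * (\<Prod>i\<in>S. encV V phi i))"
      by (subst sum.inter_restrict[OF finF]) (auto intro!: sum.cong)
    finally show "wC V phi (x, y, z) = (\<Sum>S\<in>{S. S \<subseteq> V \<times> (UNIV::bool set) \<and> card S \<le> 6}.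
        (if S \<in> Pow T then c0 S else 0) * (\<Prod>i\<in>S. encV V phi i))"
      by (simp add: F_def)
  qed
qed

lemma multi:
  assumes fin: "finite V"
    and "\<forall>(vi, vj, vk) \<in> set Cs. vi \<in> V \<and> vj \<in> V \<and> vk \<in> V \<and> distinct [vi, vj, vk]"
  shows "\<exists>c. \<forall>phi \<in> V \<rightarrow>\<^sub>E {0..3}. wCs V phi Cs =
     (\<Sum>S \<in> {S. S \<subseteq> V \<times> (UNIV::bool set) \<and> card S \<le> 6}. c S * (\<Prod>i\<in>S. encV V phi i))"
  using assms(2)
proof (induction Cs)
  case Nil
  show ?case by (rule exI[where x="\<lambda>_. 0"]) (simp add: wCs_def)
next
  case (Cons C Cs)
  obtain x y z where C: "C = (x, y, z)" by (cases C)
  have xyz: "x \<in> V" "y \<in> V" "z \<in> V" "distinct [x, y, z]" using Cons.prems C by auto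
  obtain c1 where c1: "\<forall>phi \<in> V \<rightarrow>\<^sub>E {0..3}. wC V phi (x, y, z) =
     (\<Sum>S \<in> {S. S \<subseteq> V \<times> (UNIV::bool set) \<and> card S \<le> 6}. c1 S * (\<Prod>i\<in>S. encV V phi i))"
    using single[OF fin xyz] by blast
  obtain c2 where c2: "\<forall>phi \<in> V \<rightarrow>\<^sub>E {0..3}. wCs V phi Cs =
     (\<Sum>S \<in> {S. S \<subseteq> V \<times> (UNIV::bool set) \<and> card S \<le> 6}. c2 S * (\<Prod>i\<in>S. encV V phi i))"
    using Cons.IH Cons.prems by auto
  show ?case
  proof (rule exI[where x="\<lambda>S. c1 S + c2 S"], intro ballI)
    fix phi :: "_ \<Rightarrow> nat" assume phi: "phi \<in> V \<rightarrow>\<^sub>E {0..3}"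
    have "wCs V phi (C # Cs) = wC V phi (x, y, z) + wCs V phi Cs" by (simp add: wCs_def C)
    also have "\<dots> = (\<Sum>S \<in> {S. S \<subseteq> V \<times> (UNIV::bool set) \<and> card S \<le> 6}. c1 S * (\<Prod>i\<in>S. encV V phi i))
       + (\<Sum>S \<in> {S. S \<subseteq> V \<times> (UNIV::bool set) \<and> card S \<le> 6}. c2 S * (\<Prod>i\<in>S. encV V phi i))"
      using c1 c2 phi by simp
    finally show "wCs V phi (C # Cs) = (\<Sum>S \<in> {S. S \<subseteq> V \<times> (UNIV::bool set) \<and> card S \<le> 6}. (c1 S + c2 S) * (\<Prod>i\<in>S. encV V phi i))"
      by (simp add: sum.distrib distrib_right)
  qed
qed

theorem lemma6:
  fixes V :: "'v set" and Cs :: "'v constr list"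
  assumes "finite V"
    and "\<forall>(vi, vj, vk) \<in> set Cs. vi \<in> V \<and> vj \<in> V \<and> vk \<in> V \<and> distinct [vi, vj, vk]"
  shows "\<exists>(I :: ('v \<times> bool) set) (enc :: ('v \<Rightarrow> nat) \<Rightarrow> ('v \<times> bool \<Rightarrow> real))
            (c :: ('v \<times> bool) set \<Rightarrow> real).
           finite I \<and>
           bij_betw enc (V \<rightarrow>\<^sub>E {0..3}) (I \<rightarrow>\<^sub>E {-1, 1}) \<and>
           (\<forall>phi \<in> V \<rightarrow>\<^sub>E {0..3}.
              wCs V phi Cs = (\<Sum>S \<in> {S. S \<subseteq> I \<and> card S \<le> 6}. c S * (\<Prod>i\<in>S. enc phi i)))"
proof -
  obtain c where c: "\<forall>phi \<in> V \<rightarrow>\<^sub>E {0..3}. wCs V phi Cs =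
     (\<Sum>S \<in> {S. S \<subseteq> V \<times> (UNIV::bool set) \<and> card S \<le> 6}. c S * (\<Prod>i\<in>S. encV V phi i))"
    using multi[OF assms] by blast
  have "finite (V \<times> (UNIV :: bool set))" using assms(1) by simp
  then show ?thesis using enc_bij[of V] c by blast
qed


end
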